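(* Let $n$ be an odd positive integer having a unique prime divisor $p'$ with $v_{p'}(n)=2$, such that $v_q(n)=1$ for every prime divisor $q\neq p'$ of $n$, and suppose every prime divisor of $n$ is at least $7$. Let $A=S(n)$. If $\omega(n)\neq 2$, then $D_A(n)=\Omega(n)+1$.
   Context: $\mathbb{Z}_n$ is the integers mod $n$, $U(n)$ its unit group. For nonempty $A\subseteq\mathbb{Z}_n\setminus\{0\}$, a sequence $(x_1,\ldots,x_k)$ is an $A$-weighted zero-sum sequence if $\sum a_ix_i=0$ for some $a_i\in A$; $D_A(n)$ is the least $k$ such that every length-$k$ sequence in $\mathbb{Z}_n$ has a nonempty $A$-weighted zero-sum subsequence. $v_p(n)=r$ means $p^r\mid n$, $p^{r+1}\nmid n$; $\Omega(n)$ is the number of prime factors with multiplicity and $\omega(n)$ the number of distinct prime factors. For odd $n=\prod p_i^{r_i}$ and $a\in U(n)$, $\left(\frac{a}{n}\right)=\prod\left(\frac{a}{p_i}\right)^{r_i}$ (Legendre symbols of images mod $p_i$), and $S(n)$ is the kernel of $a\mapsto\left(\frac{a}{n}\right)$ on $U(n)$. *)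

theory Defs
  imports "HOL-Number_Theory.Number_Theory"
begin

text \<open>Elements of Z_n are represented by naturals in {0..<n}; a sequence of length k
  is a list of such naturals.\<close>

definition has_A_zero_sum_subseq :: "nat \<Rightarrow> nat set \<Rightarrow> nat list \<Rightarrow> bool" where
  "has_A_zero_sum_subseq n A xs \<longleftrightarrow>
     (\<exists>I. I \<subseteq> {..<length xs} \<and> I \<noteq> {} \<and>
        (\<exists>a. (\<forall>i\<in>I. a i \<in> A) \<and> [(\<Sum>i\<in>I. a i * xs ! i) = 0] (mod n)))"

definition D_A :: "nat set \<Rightarrow> nat \<Rightarrow> nat" where
  "D_A A n = (LEAST k. \<forall>xs. length xs = k \<and> set xs \<subseteq> {..<n} \<longrightarrow>
                              has_A_zero_sum_subseq n A xs)"

definition jacobi_sym :: "nat \<Rightarrow> nat \<Rightarrow> int" where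
  "jacobi_sym a n = (\<Prod>p\<in>prime_factors n. Legendre (int a) (int p) ^ multiplicity p n)"

definition S_set :: "nat \<Rightarrow> nat set" where
  "S_set n = {a \<in> {0..<n}. coprime a n \<and> jacobi_sym a n = 1}"

definition big_omega :: "nat \<Rightarrow> nat" where
  "big_omega n = (\<Sum>p\<in>prime_factors n. multiplicity p n)"

definition small_omega :: "nat \<Rightarrow> nat" where
  "small_omega n = card (prime_factors n)"

end

theory Submission
  imports Defs
begin


lemma Leg_cong:
  assumes "[a = b] (mod m)"
  shows "Legendre a m = Legendre b m"
proof -
  have 1: "[a = 0] (mod m) \<longleftrightarrow> [b = 0] (mod m)"
    using assms cong_sym cong_trans by metis
  have 2: "QuadRes m a \<longleftrightarrow> QuadRes m b"
    unfolding QuadRes_def using assms cong_sym cong_trans by metis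
  show ?thesis unfolding Legendre_def using 1 2 by simp
qed

lemma Leg_zero:
  assumes "m dvd a" shows "Legendre a m = 0"
  using assms by (simp add: Legendre_def cong_0_iff)

lemma Leg_pm:
  assumes "\<not> m dvd a" shows "Legendre a m = 1 \<or> Legendre a m = -1"
  using assms by (simp add: Legendre_def cong_0_iff)

lemma Leg_sq:
  assumes "prime (q::nat)" "\<not> int q dvd a"
  shows "Legendre (a^2) q = 1"
proof -
  have "\<not> int q dvd a^2" using assms
    by (metis prime_dvd_power prime_nat_int_transfer)
  moreover have "QuadRes q (a^2)" unfolding QuadRes_def by (meson cong_refl)
  ultimately show ?thesis by (simp add: Legendre_def cong_0_iff)
qed

lemma Leg_mult:
  assumes "prime (q::nat)" "2 < q"
  shows "Legendre (a*b) q = Legendre a q * Legendre b q"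
proof -
  let ?h = "(q - 1) div 2"
  have e1: "[Legendre a q = a ^ ?h] (mod q)" by (rule euler_criterion[OF assms])
  have e2: "[Legendre b q = b ^ ?h] (mod q)" by (rule euler_criterion[OF assms])
  have e3: "[Legendre (a*b) q = (a*b) ^ ?h] (mod q)" by (rule euler_criterion[OF assms])
  have "[Legendre a q * Legendre b q = a^?h * b^?h] (mod q)" using e1 e2 cong_mult by blast
  then have "[Legendre (a*b) q = Legendre a q * Legendre b q] (mod q)"
    using e3 by (metis cong_sym cong_trans power_mult_distrib)
  then have d: "int q dvd (Legendre (a*b) q - Legendre a q * Legendre b q)"
    by (simp add: cong_iff_dvd_diff)
  have r: "\<And>c. Legendre c q \<in> {-1,0,1}" by (simp add: Legendre_def)
  have "Legendre (a*b) q - Legendre a q * Legendre b q \<in> {-2,-1,0,1,2}"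
    using r[of "a*b"] r[of a] r[of b] by auto
  moreover have "\<And>z::int. z \<in> {-2,-1,1,2} \<Longrightarrow> \<not> int q dvd z"
  proof -
    fix z :: int assume "z \<in> {-2,-1,1,2}"
    then have "0 < \<bar>z\<bar>" "\<bar>z\<bar> < int q" using assms by auto
    then show "\<not> int q dvd z" using dvd_imp_le_int[of z "int q"]
      by force
  qed
  ultimately show ?thesis using d by fastforce
qed

lemma Leg_inv:
  assumes "prime (q::nat)" "\<not> int q dvd a"
  shows "\<exists>a'. [a * a' = 1] (mod int q) \<and> \<not> int q dvd a'"
proof -
  have "coprime a (int q)" using assms
    by (metis coprime_commute prime_imp_coprime prime_nat_int_transfer)
  then obtain a' where h: "[a * a' = 1] (mod int q)" using cong_solve_coprime_int by blast
  have "\<not> int q dvd a'"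
  proof
    assume "int q dvd a'"
    then have "int q dvd a * a'" by simp
    then have "int q dvd 1" using h cong_dvd_iff by blast
    then show False using assms prime_gt_1_nat by auto
  qed
  then show ?thesis using h by blast
qed



locale qp =
  fixes q :: nat
  assumes qprime: "prime q" and q7: "7 \<le> q"
begin

lemma q2: "2 < q" using q7 by simp

lemma qodd: "odd q"
  using qprime q7 prime_odd_nat by auto

lemma qpos: "0 < int q" using q7 by simp

lemma ndvd_small: "0 < z \<Longrightarrow> z < int q \<Longrightarrow> \<not> int q dvd z"
  using zdvd_imp_le by fastforce

lemma mult: "Legendre (a*b) q = Legendre a q * Legendre b q"
  by (rule Leg_mult[OF qprime q2])

lemma ndvd_mult: "\<not> int q dvd a \<Longrightarrow> \<not> int q dvd b \<Longrightarrow> \<not> int q dvd (a*b)"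
  by (metis prime_dvd_mult_iff prime_nat_int_transfer qprime)

lemma Leg_nz: "Legendre a q \<noteq> 0 \<Longrightarrow> \<not> int q dvd a"
  using Leg_zero by blast

lemma Leg_one: "Legendre 1 q = 1"
  using Leg_sq[OF qprime, of 1] q7 by simp

lemma Leg_inv_eq:
  assumes "[a * a' = 1] (mod int q)" "\<not> int q dvd a"
  shows "Legendre a' q = Legendre a q"
proof -
  have "Legendre a q * Legendre a' q = 1"
    using Leg_cong[OF assms(1)] mult Leg_one by simp
  then show ?thesis using Leg_pm[OF assms(2)] by auto
qed

lemma nonres: "\<exists>g. \<not> int q dvd g \<and> Legendre g q = -1"
proof (rule ccontr)
  assume H: "\<not> (\<exists>g. \<not> int q dvd g \<and> Legendre g q = -1)"
  define h where "h = (int q - 1) div 2"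
  have sub: "{1..int q - 1} \<subseteq> (\<lambda>y. y^2 mod int q) ` {1..h}"
  proof
    fix a assume a: "a \<in> {1..int q - 1}"
    then have nd: "\<not> int q dvd a" using ndvd_small by auto
    then have "Legendre a q = 1" using H Leg_pm by blast
    then have "QuadRes q a" by (simp add: Legendre_def split: if_splits)
    then obtain y where y: "[y^2 = a] (mod int q)" unfolding QuadRes_def by blast
    define y' where "y' = y mod int q"
    have y'r: "0 \<le> y'" "y' < int q" using qpos unfolding y'_def by auto
    have y'c: "[y'^2 = a] (mod int q)" unfolding y'_def
      using y by (metis cong_def power_mod)
    have y'nz: "y' \<noteq> 0"
    proof
      assume "y' = 0"
      then have "int q dvd a" using y'c q7 by (simp add: cong_def zmod_eq_0_iff dvd_eq_mod_eq_0) 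
      then show False using nd by simp
    qed
    have amod: "a mod int q = a" using a by auto
    show "a \<in> (\<lambda>y. y^2 mod int q) ` {1..h}"
    proof (cases "y' \<le> h")
      case True
      then show ?thesis using y'c y'nz y'r amod unfolding cong_def
        by (intro image_eqI[of _ _ y']) auto
    next
      case False
      define z where "z = int q - y'"
      have "z \<in> {1..h}" using False y'r qodd unfolding z_def h_def
        by (auto elim!: oddE) 
      moreover have "[z^2 = y'^2] (mod int q)"
        unfolding z_def cong_iff_dvd_diff by (simp add: power2_eq_square algebra_simps)
      ultimately show ?thesis using y'c amod unfolding cong_def
        by (intro image_eqI[of _ _ z]) auto
    qed
  qed
  have "card {1..int q - 1} \<le> card {1..h}"
    using card_image_le[of "{1..h}" "\<lambda>y. y^2 mod int q"] card_mono[OF _ sub] by fastforce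
  then show False using q7 unfolding h_def by simp
qed

lemma nonres_nat: "\<exists>k::nat. k < q \<and> Legendre (int k) q = -1"
proof -
  obtain g where g: "\<not> int q dvd g" "Legendre g q = -1" using nonres by blast
  define k where "k = nat (g mod int q)"
  have "int k = g mod int q" using qpos unfolding k_def by simp
  then have "[int k = g] (mod int q)" by (simp add: cong_def)
  then have "Legendre (int k) q = -1" using g Leg_cong by metis
  moreover have "k < q" using qpos unfolding k_def by (simp add: nat_less_iff)
  ultimately show ?thesis by blast
qed

end


context qp begin

lemma inv_ex: "\<not> int q dvd a \<Longrightarrow> \<exists>a'. [a * a' = 1] (mod int q) \<and> \<not> int q dvd a'"
  using Leg_inv[OF qprime] by blast

lemma Leg_sq': "\<not> int q dvd a \<Longrightarrow> Legendre (a^2) q = 1"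
  using Leg_sq[OF qprime] by blast

lemma nd_cong: "[a = b] (mod int q) \<Longrightarrow> \<not> int q dvd b \<Longrightarrow> \<not> int q dvd a"
  using cong_dvd_iff by blast

lemma pat11: "\<exists>u. \<not> int q dvd u \<and> \<not> int q dvd (1-u) \<and> Legendre u q = 1 \<and> Legendre (1-u) q = 1"
proof -
  have n5: "\<not> int q dvd 5" using ndvd_small q7 by auto
  obtain w where w: "[5 * w = 1] (mod int q)" "\<not> int q dvd w" using inv_ex[OF n5] by blast
  have n4: "\<not> int q dvd 4" "\<not> int q dvd 3" using ndvd_small q7 by auto
  have a: "\<not> int q dvd (4*w)" "\<not> int q dvd (3*w)" using n4 w ndvd_mult by auto
  have "[(5*w)^2 = 1] (mod int q)" using w(1) by (metis cong_pow power_one)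
  then have "[1 - (4*w)^2 = (5*w)^2 - (4*w)^2] (mod int q)"
    by (metis cong_diff cong_refl cong_sym)
  then have c: "[1 - (4*w)^2 = (3*w)^2] (mod int q)"
    by (simp add: power2_eq_square algebra_simps)
  have s1: "\<not> int q dvd (4*w)^2" "\<not> int q dvd (3*w)^2" using a ndvd_mult unfolding power2_eq_square by blast+
  show ?thesis
    apply (rule exI[of _ "(4*w)^2"])
    using s1 a Leg_sq'[of "4*w"] Leg_sq'[of "3*w"] Leg_cong[OF c] nd_cong[OF c] by simp
qed

lemma patNN: "\<exists>u. \<not> int q dvd u \<and> \<not> int q dvd (1-u) \<and> Legendre u q = -1 \<and> Legendre (1-u) q = -1"
proof -
  define n0 where "n0 = (LEAST k::nat. Legendre (int k) q = -1)"
  obtain k0 where k0: "k0 < q" "Legendre (int k0) q = -1" using nonres_nat by blast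
  have n0L: "Legendre (int n0) q = -1" unfolding n0_def by (rule LeastI[of _ k0]) (use k0 in auto)
  have n0le: "n0 \<le> k0" unfolding n0_def by (rule Least_le) (use k0 in auto)
  have n0ne0: "n0 \<noteq> 0"
  proof
    assume "n0 = 0" then show False using n0L Leg_zero[of "int q" 0] by simp
  qed
  have n0ne1: "n0 \<noteq> 1" using n0L Leg_one by auto
  have min: "Legendre (int (n0 - 1)) q \<noteq> -1"
    using not_less_Least[of "n0 - 1" "\<lambda>k. Legendre (int k) q = -1"] n0ne0 unfolding n0_def by auto
  have "\<not> int q dvd int (n0 - 1)" using n0ne0 n0ne1 n0le k0 by (intro ndvd_small) auto
  then have r: "Legendre (int n0 - 1) q = 1" using min Leg_pm n0ne0 by (auto simp: of_nat_diff)
  have nd0: "\<not> int q dvd int n0" using n0L Leg_zero by fastforce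
  obtain v where v: "[int n0 * v = 1] (mod int q)" "\<not> int q dvd v" using inv_ex[OF nd0] by blast
  have Lv: "Legendre v q = -1" using Leg_inv_eq[OF v(1) nd0] n0L by simp
  define u where "u = (int n0 - 1) * v"
  have Lu: "Legendre u q = -1" unfolding u_def mult using r Lv by simp
  have "[1 - u = 1 - int n0 * v + v] (mod int q)" unfolding u_def by (simp add: algebra_simps cong_refl)
  moreover have "[1 - int n0 * v + v = 1 - 1 + v] (mod int q)"
    using v(1) by (intro cong_add cong_diff cong_refl) auto
  ultimately have "[1 - u = v] (mod int q)" by (metis cong_trans add.commute diff_self add_0)
  then have L1u: "Legendre (1 - u) q = -1" using Leg_cong Lv by metis
  show ?thesis using Lu L1u Leg_zero by (intro exI[of _ u]) fastforce
qed

lemma patRN: "\<exists>u. \<not> int q dvd u \<and> \<not> int q dvd (1-u) \<and> Legendre u q = 1 \<and> Legendre (1-u) q = -1"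
proof (rule ccontr)
  assume "\<not> ?thesis"
  then have H: "\<And>u. \<not> int q dvd u \<Longrightarrow> \<not> int q dvd (1-u) \<Longrightarrow> Legendre u q = 1 \<Longrightarrow> Legendre (1-u) q = 1"
    using Leg_pm by blast
  have n3: "\<not> int q dvd 3" "\<not> int q dvd 4" "\<not> int q dvd 2" using ndvd_small q7 by auto
  have L4: "Legendre 4 q = 1" using Leg_sq'[of 2] n3 by simp
  have Lm3: "Legendre (-3) q = 1" using H[of 4] L4 n3 by simp
  obtain t where t: "[4 * t = 1] (mod int q)" "\<not> int q dvd t" using inv_ex[OF n3(2)] by blast
  have Lt: "Legendre t q = 1" using Leg_inv_eq[OF t(1) n3(2)] L4 by simp
  have c3: "[4 * (1 - t) = 3] (mod int q)"
  proof -
    have "[4 - 4 * t = 4 - 1] (mod int q)" using t(1) by (intro cong_diff cong_refl) auto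
    then show ?thesis by (simp add: algebra_simps)
  qed
  have n1t: "\<not> int q dvd (1 - t)" using nd_cong[OF c3] n3 ndvd_mult by (metis dvd_mult)
  have L1t: "Legendre (1 - t) q = 1" using H[OF t(2) n1t Lt] .
  have L3: "Legendre 3 q = 1" using Leg_cong[OF c3] mult[of 4 "1-t"] L4 L1t by simp
  have Lm1: "Legendre (-1) q = 1" using Lm3 L3 mult[of "-1" 3] by simp
  have all: "\<And>k::nat. 1 \<le> k \<Longrightarrow> k < q \<Longrightarrow> Legendre (int k) q = 1"
  proof -
    fix k :: nat assume "1 \<le> k" "k < q"
    then show "Legendre (int k) q = 1"
    proof (induction k rule: dec_induct)
      case base then show ?case using Leg_one by simp
    next
      case (step k)
      have ndk: "\<not> int q dvd int k" using step by (intro ndvd_small) auto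
      obtain k' where k': "[int k * k' = 1] (mod int q)" "\<not> int q dvd k'" using inv_ex[OF ndk] by blast
      have Lk: "Legendre (int k) q = 1" using step by simp
      have Lk': "Legendre k' q = 1" using Leg_inv_eq[OF k'(1) ndk] Lk by simp
      have Lu: "Legendre (- k') q = 1" using mult[of "-1" k'] Lm1 Lk' by simp
      have c: "[int k * (1 + k') = int k + 1] (mod int q)"
      proof -
        have "[int k + int k * k' = int k + 1] (mod int q)" using k'(1) by (intro cong_add cong_refl) auto
        then show ?thesis by (simp add: algebra_simps)
      qed
      have ndk1: "\<not> int q dvd (int k + 1)" using step by (intro ndvd_small) auto
      have nd1: "\<not> int q dvd (1 - - k')" using nd_cong[OF c ndk1] by (metis diff_minus_eq_add dvd_mult)
      have "Legendre (1 - - k') q = 1" using H[of "-k'"] k'(2) nd1 Lu by simp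
      then have "Legendre (int k + 1) q = 1" using Leg_cong[OF c] mult Lk by simp
      then show ?case by (simp add: add.commute)
    qed
  qed
  obtain k0 where "k0 < q" "Legendre (int k0) q = -1" using nonres_nat by blast
  moreover have "k0 \<noteq> 0"
  proof
    assume "k0 = 0" then show False using calculation Leg_zero[of "int q" 0] by simp
  qed
  ultimately show False using all[of k0] by simp
qed

lemma pattern:
  assumes "al = 1 \<or> al = -1" "be = 1 \<or> be = -1"
  shows "\<exists>u. \<not> int q dvd u \<and> \<not> int q dvd (1-u) \<and> Legendre u q = al \<and> Legendre (1-u) q = be"
proof -
  have NR: "\<exists>u. \<not> int q dvd u \<and> \<not> int q dvd (1-u) \<and> Legendre u q = -1 \<and> Legendre (1-u) q = 1"
  proof -
    obtain u where "\<not> int q dvd u \<and> \<not> int q dvd (1-u) \<and> Legendre u q = 1 \<and> Legendre (1-u) q = -1"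
      using patRN by blast
    then show ?thesis by (intro exI[of _ "1-u"]) auto
  qed
  show ?thesis using assms pat11 patNN patRN NR by blast
qed

end


context qp begin

lemma rep_ex: "e = 1 \<or> e = -1 \<Longrightarrow> \<exists>r. Legendre r q = e"
  using Leg_one nonres by blast

lemma Lpm: "\<not> int q dvd a \<Longrightarrow> Legendre a q * Legendre a q = 1"
  using Leg_pm by fastforce

lemma two_term:
  assumes y: "\<not> int q dvd y1" "\<not> int q dvd y2" and t: "\<not> int q dvd t"
    and e: "e1 = 1 \<or> e1 = -1" "e2 = 1 \<or> e2 = -1"
  shows "\<exists>c1 c2. Legendre c1 q = e1 \<and> Legendre c2 q = e2 \<and> [c1*y1 + c2*y2 = t] (mod int q)"
proof -
  have al: "e1 * Legendre y1 q * Legendre t q = 1 \<or> e1 * Legendre y1 q * Legendre t q = -1"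
    using e Leg_pm[OF y(1)] Leg_pm[OF t] by auto
  have be: "e2 * Legendre y2 q * Legendre t q = 1 \<or> e2 * Legendre y2 q * Legendre t q = -1"
    using e Leg_pm[OF y(2)] Leg_pm[OF t] by auto
  obtain u where u: "Legendre u q = e1 * Legendre y1 q * Legendre t q"
      "Legendre (1-u) q = e2 * Legendre y2 q * Legendre t q"
    using pattern[OF al be] by blast
  obtain y1' where y1': "[y1 * y1' = 1] (mod int q)" "\<not> int q dvd y1'" using inv_ex[OF y(1)] by blast
  obtain y2' where y2': "[y2 * y2' = 1] (mod int q)" "\<not> int q dvd y2'" using inv_ex[OF y(2)] by blast
  have L1: "Legendre y1' q = Legendre y1 q" using Leg_inv_eq[OF y1'(1) y(1)] .
  have L2: "Legendre y2' q = Legendre y2 q" using Leg_inv_eq[OF y2'(1) y(2)] .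
  define c1 where "c1 = u * t * y1'"
  define c2 where "c2 = (1 - u) * t * y2'"
  have "Legendre c1 q = e1 * (Legendre y1 q * Legendre y1 q) * (Legendre t q * Legendre t q)"
    unfolding c1_def mult u L1 by (simp add: algebra_simps)
  then have C1: "Legendre c1 q = e1" using Lpm[OF y(1)] Lpm[OF t] by simp
  have "Legendre c2 q = e2 * (Legendre y2 q * Legendre y2 q) * (Legendre t q * Legendre t q)"
    unfolding c2_def mult u L2 by (simp add: algebra_simps)
  then have C2: "Legendre c2 q = e2" using Lpm[OF y(2)] Lpm[OF t] by simp
  have s1: "[c1 * y1 = u * t] (mod int q)"
  proof -
    have "[u * t * (y1 * y1') = u * t * 1] (mod int q)" using y1'(1) by (intro cong_mult cong_refl)
    then show ?thesis unfolding c1_def by (simp add: algebra_simps)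
  qed
  have s2: "[c2 * y2 = (1 - u) * t] (mod int q)"
  proof -
    have "[(1 - u) * t * (y2 * y2') = (1 - u) * t * 1] (mod int q)" using y2'(1) by (intro cong_mult cong_refl)
    then show ?thesis unfolding c2_def by (simp add: algebra_simps)
  qed
  have "[c1 * y1 + c2 * y2 = u * t + (1 - u) * t] (mod int q)" using s1 s2 by (rule cong_add)
  then have "[c1 * y1 + c2 * y2 = t] (mod int q)" by (simp add: algebra_simps)
  then show ?thesis using C1 C2 by blast
qed

end

context qp begin
lemma many_term_aux:
  "\<forall>N t. finite N \<and> card N = Suc (Suc k) \<and> (\<forall>i\<in>N. \<not> int q dvd y i) \<and> (\<forall>i\<in>N. e i = 1 \<or> e i = -1)
     \<and> \<not> int q dvd t \<longrightarrow> (\<exists>c. (\<forall>i\<in>N. Legendre (c i) q = e i) \<and> [(\<Sum>i\<in>N. c i * y i) = t] (mod int q))"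
proof (induction k)
  case 0
  show ?case
  proof (intro allI impI)
    fix N t
    assume H: "finite N \<and> card N = Suc (Suc 0) \<and> (\<forall>i\<in>N. \<not> int q dvd y i) \<and> (\<forall>i\<in>N. e i = 1 \<or> e i = -1)
     \<and> \<not> int q dvd t"
    then obtain i j where ij: "N = {i, j}" "i \<noteq> j" by (metis card_2_iff numeral_2_eq_2)
    obtain c1 c2 where c: "Legendre c1 q = e i" "Legendre c2 q = e j" "[c1 * y i + c2 * y j = t] (mod int q)"
      using two_term[of "y i" "y j" t "e i" "e j"] H ij by auto
    show "\<exists>c. (\<forall>i\<in>N. Legendre (c i) q = e i) \<and> [(\<Sum>i\<in>N. c i * y i) = t] (mod int q)"
      by (rule exI[of _ "(\<lambda>k. if k = i then c1 else c2)"]) (use c ij in auto)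
  qed
next
  case (Suc k)
  show ?case
  proof (intro allI impI)
    fix N t
    assume H: "finite N \<and> card N = Suc (Suc (Suc k)) \<and> (\<forall>i\<in>N. \<not> int q dvd y i) \<and> (\<forall>i\<in>N. e i = 1 \<or> e i = -1)
     \<and> \<not> int q dvd t"
    then obtain i where i: "i \<in> N" by fastforce
    define N' where "N' = N - {i}"
    have cN': "card N' = Suc (Suc k)" "finite N'" using i H unfolding N'_def by auto
    obtain r where r: "Legendre r q = e i" using rep_ex H i by blast
    have ndr: "\<not> int q dvd r" using r H i Leg_zero by fastforce
    have ndyi: "\<not> int q dvd y i" using H i by auto
    have L4: "Legendre 4 q = 1" using Leg_sq'[of 2] ndvd_small q7 by simp
    have n3: "\<not> int q dvd 3" using ndvd_small q7 by auto
    have "\<exists>ci. Legendre ci q = e i \<and> \<not> int q dvd (t - ci * y i)"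
    proof (cases "int q dvd (t - r * y i)")
      case False then show ?thesis using r by blast
    next
      case True
      have "Legendre (4 * r) q = e i" using mult L4 r by simp
      moreover have "\<not> int q dvd (t - 4 * r * y i)"
      proof
        assume "int q dvd (t - 4 * r * y i)"
        then have "int q dvd ((t - r * y i) - (t - 4 * r * y i))" using dvd_diff[OF True] by blast
        then have "int q dvd (3 * (r * y i))" by (simp add: algebra_simps)
        then show False using n3 ndr ndyi ndvd_mult by blast
      qed
      ultimately show ?thesis by blast
    qed
    then obtain ci where ci: "Legendre ci q = e i" "\<not> int q dvd (t - ci * y i)" by blast
    have pre: "finite N' \<and> card N' = Suc (Suc k) \<and> (\<forall>i\<in>N'. \<not> int q dvd y i) \<and> (\<forall>i\<in>N'. e i = 1 \<or> e i = -1)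
     \<and> \<not> int q dvd (t - ci * y i)" using cN' H ci unfolding N'_def by auto
    obtain c where c: "\<forall>k\<in>N'. Legendre (c k) q = e k" "[(\<Sum>k\<in>N'. c k * y k) = t - ci * y i] (mod int q)"
      using Suc.IH pre by blast
    define c' where "c' = c(i := ci)"
    have "(\<Sum>k\<in>N. c' k * y k) = c' i * y i + (\<Sum>k\<in>N'. c' k * y k)"
      using i H unfolding N'_def by (simp add: sum.remove)
    also have "(\<Sum>k\<in>N'. c' k * y k) = (\<Sum>k\<in>N'. c k * y k)"
      unfolding c'_def N'_def by (intro sum.cong) auto
    finally have "(\<Sum>k\<in>N. c' k * y k) = ci * y i + (\<Sum>k\<in>N'. c k * y k)" unfolding c'_def by simp
    moreover have "[ci * y i + (\<Sum>k\<in>N'. c k * y k) = ci * y i + (t - ci * y i)] (mod int q)"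
      using c(2) by (intro cong_add cong_refl)
    ultimately have "[(\<Sum>k\<in>N. c' k * y k) = t] (mod int q)" by simp
    moreover have "\<forall>k\<in>N. Legendre (c' k) q = e k" using c(1) ci(1) unfolding c'_def N'_def by auto
    ultimately show "\<exists>c. (\<forall>i\<in>N. Legendre (c i) q = e i) \<and> [(\<Sum>i\<in>N. c i * y i) = t] (mod int q)" by blast
  qed
qed

lemma many_term:
  assumes "finite N" "2 \<le> card N" "\<forall>i\<in>N. \<not> int q dvd y i" "\<forall>i\<in>N. e i = 1 \<or> e i = -1"
    "\<not> int q dvd t"
  shows "\<exists>c. (\<forall>i\<in>N. Legendre (c i) q = e i) \<and> [(\<Sum>i\<in>N. c i * y i) = t] (mod int q)"
proof -
  obtain k where "card N = Suc (Suc k)" using assms(2) by (metis add_2_eq_Suc le_Suc_ex)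
  then show ?thesis using many_term_aux[of k y e] assms by blast
qed

end

context qp begin

lemma comp_q:
  assumes fin: "finite I" and e: "\<forall>i\<in>I. e i = 1 \<or> e i = -1"
    and c1: "card {i\<in>I. \<not> int q dvd y i} \<noteq> 1"
    and c2: "\<forall>i j. i \<noteq> j \<longrightarrow> {i\<in>I. \<not> int q dvd y i} = {i,j} \<longrightarrow> e i * e j = Legendre (- (y i * y j)) q"
  shows "\<exists>c. (\<forall>i\<in>I. Legendre (c i) q = e i) \<and> int q dvd (\<Sum>i\<in>I. c i * y i)"
proof -
  define N where "N = {i\<in>I. \<not> int q dvd y i}"
  have finN: "finite N" using fin unfolding N_def by auto
  define c0 where "c0 = (\<lambda>i. SOME r. Legendre r q = e i)"
  have c0: "\<forall>i\<in>I. Legendre (c0 i) q = e i"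
  proof
    fix i assume "i \<in> I"
    then have "\<exists>r. Legendre r q = e i" using rep_ex e by simp
    then show "Legendre (c0 i) q = e i" unfolding c0_def by (rule someI_ex)
  qed
  have "\<exists>c. (\<forall>i\<in>N. Legendre (c i) q = e i) \<and> int q dvd (\<Sum>i\<in>N. c i * y i)"
  proof (cases "card N = 0")
    case True
    then have "N = {}" using finN by simp
    then show ?thesis by simp
  next
    case False
    then have cN: "card N \<ge> 2" using c1 unfolding N_def by linarith
    show ?thesis
    proof (cases "card N = 2")
      case True
      then obtain i j where ij: "N = {i, j}" "i \<noteq> j" by (meson card_2_iff)
      have iI: "i \<in> I" "j \<in> I" using ij unfolding N_def by auto
      have ndy: "\<not> int q dvd y i" "\<not> int q dvd y j" using ij unfolding N_def by auto
      have rel: "e i * e j = Legendre (- (y i * y j)) q" using c2[rule_format, OF ij(2) ij(1)[unfolded N_def]] .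
      obtain yj' where yj': "[y j * yj' = 1] (mod int q)" "\<not> int q dvd yj'" using inv_ex[OF ndy(2)] by blast
      define ci where "ci = c0 i"
      define cj where "cj = - (ci * y i * yj')"
      have Lci: "Legendre ci q = e i" using c0 iI unfolding ci_def by auto
      have cjy: "[cj * y j = - (ci * y i)] (mod int q)"
      proof -
        have "[- (ci * y i) * (y j * yj') = - (ci * y i) * 1] (mod int q)"
          using yj'(1) by (intro cong_mult cong_refl)
        then show ?thesis unfolding cj_def by (simp add: algebra_simps)
      qed
      have A1: "Legendre (cj * y j * y j) q = Legendre (- (ci * y i) * y j) q"
        by (rule Leg_cong) (intro cong_mult cjy cong_refl)
      have A2: "Legendre (cj * y j * y j) q = Legendre cj q * (Legendre (y j) q * Legendre (y j) q)"
        unfolding mult by simp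
      have A3: "- (ci * y i) * y j = ci * (- (y i * y j))" by simp
      have "Legendre cj q = Legendre (- (ci * y i) * y j) q"
        using A1 A2 Lpm[OF ndy(2)] by simp
      also have "\<dots> = Legendre ci q * Legendre (- (y i * y j)) q"
        unfolding A3 by (rule mult)
      also have "\<dots> = e i * e i * e j" using rel Lci by simp
      also have "\<dots> = e j" using e iI by auto
      finally have Lcj: "Legendre cj q = e j" .
      have "[ci * y i + cj * y j = ci * y i + - (ci * y i)] (mod int q)"
        using cjy by (intro cong_add cong_refl)
      then have "int q dvd (ci * y i + cj * y j)" by (simp add: cong_0_iff)
      then show ?thesis using Lci Lcj ij
        by (intro exI[of _ "(\<lambda>k. if k = i then ci else cj)"]) auto
    next
      case False
      then have c3: "card N \<ge> 3" using cN by simp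
      then obtain i0 where i0: "i0 \<in> N" by fastforce
      have i0I: "i0 \<in> I" using i0 unfolding N_def by auto
      have ndy0: "\<not> int q dvd y i0" using i0 unfolding N_def by auto
      define N' where "N' = N - {i0}"
      have cN': "2 \<le> card N'" "finite N'" using c3 i0 finN unfolding N'_def by auto
      have nd0: "\<not> int q dvd c0 i0" using c0 i0I e Leg_zero by fastforce
      have ndt: "\<not> int q dvd (- (c0 i0 * y i0))" using ndvd_mult[OF nd0 ndy0] by simp
      have p3: "\<forall>i\<in>N'. \<not> int q dvd y i" "\<forall>i\<in>N'. e i = 1 \<or> e i = -1"
        using e unfolding N'_def N_def by auto
      obtain c where c: "\<forall>k\<in>N'. Legendre (c k) q = e k" "[(\<Sum>k\<in>N'. c k * y k) = - (c0 i0 * y i0)] (mod int q)"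
        using many_term[OF cN'(2) cN'(1) p3 ndt] by blast
      define c' where "c' = c(i0 := c0 i0)"
      have "(\<Sum>k\<in>N. c' k * y k) = c' i0 * y i0 + (\<Sum>k\<in>N'. c' k * y k)"
        using i0 finN unfolding N'_def by (simp add: sum.remove)
      also have "(\<Sum>k\<in>N'. c' k * y k) = (\<Sum>k\<in>N'. c k * y k)"
        unfolding c'_def N'_def by (intro sum.cong) auto
      finally have "(\<Sum>k\<in>N. c' k * y k) = c0 i0 * y i0 + (\<Sum>k\<in>N'. c k * y k)" unfolding c'_def by simp
      moreover have "[c0 i0 * y i0 + (\<Sum>k\<in>N'. c k * y k) = c0 i0 * y i0 + - (c0 i0 * y i0)] (mod int q)"
        using c(2) by (intro cong_add cong_refl)
      ultimately have "int q dvd (\<Sum>k\<in>N. c' k * y k)" by (simp add: cong_0_iff)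
      moreover have "\<forall>k\<in>N. Legendre (c' k) q = e k" using c(1) c0 i0I unfolding c'_def N'_def N_def by auto
      ultimately show ?thesis by blast
    qed
  qed
  then obtain c where c: "\<forall>i\<in>N. Legendre (c i) q = e i" "int q dvd (\<Sum>i\<in>N. c i * y i)" by blast
  define c' where "c' = (\<lambda>i. if i \<in> N then c i else c0 i)"
  have NI: "N \<subseteq> I" unfolding N_def by auto
  have "(\<Sum>i\<in>I. c' i * y i) = (\<Sum>i\<in>N. c' i * y i) + (\<Sum>i\<in>I - N. c' i * y i)"
    using fin NI by (metis add.commute sum.subset_diff)
  moreover have "(\<Sum>i\<in>N. c' i * y i) = (\<Sum>i\<in>N. c i * y i)" unfolding c'_def by simp
  moreover have "int q dvd (\<Sum>i\<in>I - N. c' i * y i)"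
    by (rule dvd_sum) (auto simp: N_def)
  ultimately have "int q dvd (\<Sum>i\<in>I. c' i * y i)" using c(2) by simp
  moreover have "\<forall>i\<in>I. Legendre (c' i) q = e i" using c(1) c0 unfolding c'_def by auto
  ultimately show ?thesis by blast
qed

end


lemma pair_zero_aux:
  fixes x :: "'a \<Rightarrow> int"
  assumes G: "\<forall>i\<in>S0. \<forall>j\<in>S0. i \<noteq> j \<longrightarrow> (\<exists>bi bj. G i bi \<and> G j bj \<and> bi * x i + bj * x j = 0)"
  shows "\<forall>S. S \<subseteq> S0 \<and> finite S \<and> card S = 2 * k \<longrightarrow> (\<exists>b. (\<forall>i\<in>S. G i (b i)) \<and> (\<Sum>i\<in>S. b i * x i) = 0)"
proof (induction k)
  case 0
  then show ?case by auto
next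
  case (Suc k)
  show ?case
  proof (intro allI impI)
    fix S assume H: "S \<subseteq> S0 \<and> finite S \<and> card S = 2 * Suc k"
    then obtain i where i: "i \<in> S" by (metis card.empty ex_in_conv mult_is_0 nat.simps(3) zero_neq_numeral)
    have "card (S - {i}) = 2 * k + 1" using H i by simp
    then obtain j where j: "j \<in> S - {i}" by (metis card.empty ex_in_conv add_is_0 one_neq_zero)
    define S' where "S' = S - {i} - {j}"
    have S': "S' \<subseteq> S0 \<and> finite S' \<and> card S' = 2 * k" using H i j unfolding S'_def by auto
    obtain b where b: "\<forall>l\<in>S'. G l (b l)" "(\<Sum>l\<in>S'. b l * x l) = 0" using Suc.IH S' by blast
    have ij: "i \<in> S0" "j \<in> S0" "i \<noteq> j" using H i j by auto
    obtain bi bj where bij: "G i bi" "G j bj" "bi * x i + bj * x j = 0" using G ij by blast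
    define b' where "b' = b(i := bi, j := bj)"
    have "(\<Sum>l\<in>S. b' l * x l) = b' i * x i + (\<Sum>l\<in>S - {i}. b' l * x l)"
      using H i by (simp add: sum.remove)
    also have "(\<Sum>l\<in>S - {i}. b' l * x l) = b' j * x j + (\<Sum>l\<in>S'. b' l * x l)"
      using H j unfolding S'_def by (simp add: sum.remove)
    also have "(\<Sum>l\<in>S'. b' l * x l) = (\<Sum>l\<in>S'. b l * x l)"
      unfolding b'_def S'_def by (intro sum.cong) auto
    finally have "(\<Sum>l\<in>S. b' l * x l) = 0" using b(2) bij(3) ij(3) unfolding b'_def by simp
    moreover have "\<forall>l\<in>S. G l (b' l)" using b(1) bij ij unfolding b'_def S'_def by auto
    ultimately show "\<exists>b. (\<forall>i\<in>S. G i (b i)) \<and> (\<Sum>i\<in>S. b i * x i) = 0" by blast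
  qed
qed

lemma pair_zero:
  fixes x :: "'a \<Rightarrow> int"
  assumes "finite S" "even (card S)"
    "\<forall>i\<in>S. \<forall>j\<in>S. i \<noteq> j \<longrightarrow> (\<exists>bi bj. G i bi \<and> G j bj \<and> bi * x i + bj * x j = 0)"
  shows "\<exists>b. (\<forall>i\<in>S. G i (b i)) \<and> (\<Sum>i\<in>S. b i * x i) = 0"
proof -
  obtain k where "card S = 2 * k" using assms(2) by (elim evenE) auto
  then show ?thesis using pair_zero_aux[OF assms(3), of k] assms(1) by blast
qed

lemma comp_p2:
  fixes p :: nat and x :: "'a \<Rightarrow> int"
  assumes pp: "prime p" and fin: "finite I"
    and eU: "even (card {i\<in>I. \<not> int p dvd x i})"
    and eV: "even (card {i\<in>I. \<not> int p^2 dvd x i})"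
  shows "\<exists>b. (\<forall>i\<in>I. \<not> int p dvd b i) \<and> int p^2 dvd (\<Sum>i\<in>I. b i * x i)"
proof -
  have ppi: "prime (int p)" using pp by simp
  define U where "U = {i\<in>I. \<not> int p dvd x i}"
  define Pt where "Pt = {i\<in>I. int p dvd x i \<and> \<not> int p^2 dvd x i}"
  define Z where "Z = {i\<in>I. int p^2 dvd x i}"
  have V: "{i\<in>I. \<not> int p^2 dvd x i} = U \<union> Pt"
    unfolding U_def Pt_def by (auto simp: power2_eq_square)
  have finU: "finite U" "finite Pt" "finite Z" using fin unfolding U_def Pt_def Z_def by auto
  have "card (U \<union> Pt) = card U + card Pt" using finU by (intro card_Un_disjoint) (auto simp: U_def Pt_def)
  then have ePt: "even (card Pt)" using eU eV V unfolding U_def by simp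
  have "\<exists>b. (\<forall>i\<in>U. \<not> int p dvd b i) \<and> (\<Sum>i\<in>U. b i * x i) = 0"
  proof (rule pair_zero[OF finU(1) eU[folded U_def]], intro ballI impI)
    fix i j assume "i \<in> U" "j \<in> U" "i \<noteq> j"
    then show "\<exists>bi bj. \<not> int p dvd bi \<and> \<not> int p dvd bj \<and> bi * x i + bj * x j = 0"
      unfolding U_def by (intro exI[of _ "x j"] exI[of _ "- x i"]) auto
  qed
  then obtain bU where bU: "\<forall>i\<in>U. \<not> int p dvd bU i" "(\<Sum>i\<in>U. bU i * x i) = 0" by blast
  have "\<exists>b. (\<forall>i\<in>Pt. \<not> int p dvd b i) \<and> (\<Sum>i\<in>Pt. b i * x i) = 0"
  proof (rule pair_zero[OF finU(2) ePt], intro ballI impI)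
    fix i j assume ij: "i \<in> Pt" "j \<in> Pt" "i \<noteq> j"
    obtain wi where wi: "x i = int p * wi" using ij unfolding Pt_def by blast
    obtain wj where wj: "x j = int p * wj" using ij unfolding Pt_def by blast
    have "\<not> int p dvd wi" using ij wi unfolding Pt_def by (auto simp: power2_eq_square)
    moreover have "\<not> int p dvd wj" using ij wj unfolding Pt_def by (auto simp: power2_eq_square)
    moreover have "wj * x i + (- wi) * x j = 0" using wi wj by simp
    ultimately show "\<exists>bi bj. \<not> int p dvd bi \<and> \<not> int p dvd bj \<and> bi * x i + bj * x j = 0"
      by (intro exI[of _ wj] exI[of _ "- wi"]) auto
  qed
  then obtain bP where bP: "\<forall>i\<in>Pt. \<not> int p dvd bP i" "(\<Sum>i\<in>Pt. bP i * x i) = 0" by blast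
  define b where "b = (\<lambda>i. if i \<in> U then bU i else if i \<in> Pt then bP i else 1)"
  have IU: "I = (U \<union> Pt) \<union> Z" unfolding U_def Pt_def Z_def by blast
  have pdv: "\<And>i. int p^2 dvd x i \<Longrightarrow> int p dvd x i"
    unfolding power2_eq_square using dvd_mult_left by blast
  have d1: "U \<inter> Pt = {}" "(U \<union> Pt) \<inter> Z = {}" unfolding U_def Pt_def Z_def using pdv by blast+
  have "(\<Sum>i\<in>I. b i * x i) = (\<Sum>i\<in>U \<union> Pt. b i * x i) + (\<Sum>i\<in>Z. b i * x i)"
    unfolding IU by (rule sum.union_disjoint) (use finU d1 in auto)
  also have "(\<Sum>i\<in>U \<union> Pt. b i * x i) = (\<Sum>i\<in>U. b i * x i) + (\<Sum>i\<in>Pt. b i * x i)"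
    by (rule sum.union_disjoint) (use finU d1 in auto)
  also have "(\<Sum>i\<in>U. b i * x i) = (\<Sum>i\<in>U. bU i * x i)"
    by (rule sum.cong) (auto simp: b_def)
  also have "(\<Sum>i\<in>Pt. b i * x i) = (\<Sum>i\<in>Pt. bP i * x i)"
    by (rule sum.cong) (use d1 in \<open>auto simp: b_def\<close>)
  finally have S: "(\<Sum>i\<in>I. b i * x i) = (\<Sum>i\<in>Z. b i * x i)" using bU(2) bP(2) by simp
  have "int p^2 dvd (\<Sum>i\<in>Z. b i * x i)" by (rule dvd_sum) (simp add: Z_def)
  then have D: "int p^2 dvd (\<Sum>i\<in>I. b i * x i)" using S by simp
  have n1: "\<not> int p dvd 1" using pp by (metis not_prime_1 of_nat_1 nat_dvd_1_iff_1 int_dvd_int_iff)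
  have "\<forall>i\<in>I. \<not> int p dvd b i"
  proof
    fix i assume "i \<in> I"
    show "\<not> int p dvd b i"
    proof (cases "i \<in> U")
      case True then show ?thesis using bU(1) unfolding b_def by simp
    next
      case False
      then show ?thesis using bP(1) n1 unfolding b_def by (cases "i \<in> Pt") simp_all
    qed
  qed
  then show ?thesis using D by blast
qed




lemma prod_pm:
  assumes "finite A" "\<forall>a\<in>A. f a = (1::int) \<or> f a = -1"
  shows "prod f A = 1 \<or> prod f A = -1"
  using assms by (induction A rule: finite_induct) auto

lemma ndvd_prod2:
  assumes "prime (q::nat)" "\<not> int q dvd a" "\<not> int q dvd b"
  shows "\<not> int q dvd (- (a * b))"
  using assms by (metis dvd_minus_iff prime_dvd_mult_iff prime_nat_int_transfer)

lemma chars: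
  fixes P :: "nat set" and I :: "'a set" and x :: "'a \<Rightarrow> int"
  assumes finP: "finite P" and finI: "finite I" and primes: "\<forall>q\<in>P. prime q"
    and H2: "\<forall>q\<in>P. card {k\<in>I. \<not> int q dvd x k} \<noteq> 1"
    and H3: "\<not> (\<exists>i j. i \<noteq> j \<and> P \<noteq> {} \<and> (\<forall>q\<in>P. {k\<in>I. \<not> int q dvd x k} = {i,j})
               \<and> (\<Prod>q\<in>P. Legendre (- (x i * x j)) q) = -1)"
  shows "\<exists>eps. (\<forall>i\<in>I. \<forall>q\<in>P. eps i q = 1 \<or> eps i q = -1) \<and> (\<forall>i\<in>I. (\<Prod>q\<in>P. eps i q) = 1)
     \<and> (\<forall>q\<in>P. \<forall>i j. i \<noteq> j \<longrightarrow> {k\<in>I. \<not> int q dvd x k} = {i,j} \<longrightarrow> eps i q * eps j q = Legendre (- (x i * x j)) q)"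
proof -
  define N where "N = (\<lambda>q::nat. {k\<in>I. \<not> int q dvd x k})"
  have finN: "\<And>q. finite (N q)" using finI unfolding N_def by auto
  define slot where "slot = (\<lambda>k q. q \<in> P \<and> (int q dvd x k \<or> 3 \<le> card (N q)))"
  define hs where "hs = (\<lambda>k. \<exists>q. slot k q)"
  define sl where "sl = (\<lambda>k. SOME q. slot k q)"
  define dl where "dl = (\<lambda>q::nat. Legendre (- (\<Prod>k\<in>N q. x k)) q)"
  define F where "F = (\<lambda>S. if \<exists>k\<in>S. hs k then SOME k. k \<in> S \<and> hs k else SOME k. k \<in> S)"
  define base where "base = (\<lambda>k q. if card (N q) = 2 \<and> dl q = -1 \<and> F (N q) = k then -1 else (1::int))"
  define eps where "eps = (\<lambda>k q. if hs k \<and> q = sl k then (\<Prod>q'\<in>P - {q}. base k q') else base k q)"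
  have base_pm: "\<And>k q. base k q = 1 \<or> base k q = -1" unfolding base_def by auto
  have bprod_pm: "\<And>k A. finite A \<Longrightarrow> (\<Prod>q\<in>A. base k q) = 1 \<or> (\<Prod>q\<in>A. base k q) = -1"
    using prod_pm base_pm by blast
  have sl_slot: "\<And>k. hs k \<Longrightarrow> slot k (sl k)" unfolding hs_def sl_def by (metis someI_ex)
  have F_in: "\<And>S. S \<noteq> {} \<Longrightarrow> F S \<in> S"
  proof -
    fix S :: "'a set" assume "S \<noteq> {}"
    then obtain a where a: "a \<in> S" by blast
    show "F S \<in> S"
    proof (cases "\<exists>k\<in>S. hs k")
      case True
      then have "(SOME k. k \<in> S \<and> hs k) \<in> S" by (metis (mono_tags, lifting) someI_ex)
      then show ?thesis unfolding F_def using True by simp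
    next
      case False
      then have "(SOME k. k \<in> S) \<in> S" using a by (metis someI_ex)
      then show ?thesis unfolding F_def using False by simp
    qed
  qed
  have F_hs: "\<And>S. \<exists>k\<in>S. hs k \<Longrightarrow> hs (F S)"
  proof -
    fix S :: "'a set" assume H: "\<exists>k\<in>S. hs k"
    then have "hs (SOME k. k \<in> S \<and> hs k)" by (metis (mono_tags, lifting) someI_ex)
    then show "hs (F S)" unfolding F_def using H by simp
  qed
  have eps_base: "\<And>k q. q \<in> P \<Longrightarrow> k \<in> N q \<Longrightarrow> card (N q) = 2 \<Longrightarrow> eps k q = base k q"
  proof -
    fix k q assume q: "q \<in> P" "k \<in> N q" "card (N q) = 2"
    have "\<not> (hs k \<and> q = sl k)"
    proof
      assume "hs k \<and> q = sl k"
      then have "slot k q" using sl_slot by blast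
      then show False using q unfolding slot_def N_def by auto
    qed
    then show "eps k q = base k q" unfolding eps_def by auto
  qed
  have A: "\<forall>i\<in>I. \<forall>q\<in>P. eps i q = 1 \<or> eps i q = -1"
    unfolding eps_def using base_pm bprod_pm finP by auto
  have C: "\<forall>q\<in>P. \<forall>i j. i \<noteq> j \<longrightarrow> N q = {i,j} \<longrightarrow> eps i q * eps j q = Legendre (- (x i * x j)) q"
  proof (intro ballI allI impI)
    fix q i j assume q: "q \<in> P" and ij: "i \<noteq> j" "N q = {i,j}"
    have c2: "card (N q) = 2" using ij by simp
    have e: "eps i q = base i q" "eps j q = base j q" using eps_base[OF q _ c2] ij by auto
    have dlq: "dl q = Legendre (- (x i * x j)) q" unfolding dl_def ij using ij by simp
    have nd: "\<not> int q dvd x i" "\<not> int q dvd x j" using ij unfolding N_def by auto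
    have "\<not> int q dvd (- (x i * x j))" using nd primes q ndvd_prod2 by blast
    then have dpm: "dl q = 1 \<or> dl q = -1" using Leg_pm dlq by metis
    show "eps i q * eps j q = Legendre (- (x i * x j)) q"
    proof (cases "dl q = -1")
      case True
      have "F (N q) \<in> {i, j}" using F_in ij by auto
      then show ?thesis using True ij c2 dlq e unfolding base_def by auto
    next
      case False
      then show ?thesis using dpm dlq e c2 unfolding base_def by auto
    qed
  qed
  have B: "\<forall>i\<in>I. (\<Prod>q\<in>P. eps i q) = 1"
  proof
    fix k assume kI: "k \<in> I"
    show "(\<Prod>q\<in>P. eps k q) = 1"
    proof (cases "hs k")
      case True
      have s: "sl k \<in> P" using sl_slot[OF True] unfolding slot_def by auto
      have "(\<Prod>q\<in>P. eps k q) = eps k (sl k) * (\<Prod>q\<in>P - {sl k}. eps k q)"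
        using s finP by (simp add: prod.remove)
      also have "(\<Prod>q\<in>P - {sl k}. eps k q) = (\<Prod>q\<in>P - {sl k}. base k q)"
        unfolding eps_def by (rule prod.cong) auto
      also have "eps k (sl k) = (\<Prod>q\<in>P - {sl k}. base k q)" unfolding eps_def using True by simp
      finally show ?thesis using bprod_pm[of "P - {sl k}" k] finP by auto
    next
      case False
      have e: "\<And>q. eps k q = base k q" unfolding eps_def using False by simp
      have noslot: "\<And>q. q \<in> P \<Longrightarrow> \<not> int q dvd x k \<and> card (N q) < 3"
        using False unfolding hs_def slot_def by auto
      have c2: "\<And>q. q \<in> P \<Longrightarrow> card (N q) = 2 \<and> k \<in> N q"
      proof -
        fix q assume q: "q \<in> P"
        have kN: "k \<in> N q" using noslot[OF q] kI unfolding N_def by simp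
        have "card (N q) \<noteq> 0" using kN finN[of q] by auto
        moreover have "card (N q) \<noteq> 1" using H2 q unfolding N_def by simp
        moreover have "card (N q) < 3" using noslot[OF q] by simp
        ultimately show "card (N q) = 2 \<and> k \<in> N q" using kN by linarith
      qed
      show ?thesis
      proof (cases "\<forall>q\<in>P. base k q = 1")
        case True
        then show ?thesis using e by simp
      next
        case False
        then obtain q0 where q0: "q0 \<in> P" "base k q0 = -1" using base_pm by auto
        have fl: "F (N q0) = k" "dl q0 = -1" using q0 unfolding base_def by (auto split: if_splits)
        have nohs: "\<not> (\<exists>k'\<in>N q0. hs k')"
        proof
          assume "\<exists>k'\<in>N q0. hs k'"
          then have "hs (F (N q0))" by (rule F_hs)
          then show False using fl \<open>\<not> hs k\<close> by simp
        qed
        have cq0: "card (N q0) = 2" "k \<in> N q0" using c2 q0 by auto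
        then have "card (N q0 - {k}) = 1" using finN by simp
        then obtain j where j0: "N q0 - {k} = {j}" by (rule card_1_singletonE)
        have j: "N q0 = {k, j}" "j \<noteq> k" using j0 cq0(2) by auto
        have jhs: "\<not> hs j" using nohs j by auto
        have jI: "j \<in> I" using j unfolding N_def by auto
        have noslotj: "\<And>q. q \<in> P \<Longrightarrow> \<not> int q dvd x j \<and> card (N q) < 3"
          using jhs unfolding hs_def slot_def by auto
        have allN: "\<forall>q\<in>P. N q = {k, j}"
        proof
          fix q assume q: "q \<in> P"
          have sub: "{k, j} \<subseteq> N q" using noslot[OF q] noslotj[OF q] kI jI unfolding N_def by auto
          have "card {k, j} = card (N q)" using c2[OF q] j by simp
          then show "N q = {k, j}" using card_subset_eq[OF finN sub] by simp
        qed
        have Pne: "P \<noteq> {}" using q0 by auto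
        have allN': "\<forall>q\<in>P. {k'\<in>I. \<not> int q dvd x k'} = {k,j}" using allN unfolding N_def .
        have ne: "(\<Prod>q\<in>P. Legendre (- (x k * x j)) q) \<noteq> -1"
        proof
          assume h: "(\<Prod>q\<in>P. Legendre (- (x k * x j)) q) = -1"
          have "k \<noteq> j" using j(2) by simp
          then have "\<exists>i j'. i \<noteq> j' \<and> P \<noteq> {} \<and> (\<forall>q\<in>P. {k'\<in>I. \<not> int q dvd x k'} = {i,j'})
               \<and> (\<Prod>q\<in>P. Legendre (- (x i * x j')) q) = -1"
            using Pne allN' h by (intro exI[of _ k] exI[of _ j] conjI)
          then show False using H3 by simp
        qed
        have pmL: "\<forall>q\<in>P. Legendre (- (x k * x j)) q = 1 \<or> Legendre (- (x k * x j)) q = -1"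
        proof
          fix q assume q: "q \<in> P"
          have "\<not> int q dvd x k" "\<not> int q dvd x j" using noslot[OF q] noslotj[OF q] by simp_all
          then have "\<not> int q dvd (- (x k * x j))" using ndvd_prod2 primes q by blast
          then show "Legendre (- (x k * x j)) q = 1 \<or> Legendre (- (x k * x j)) q = -1" using Leg_pm by blast
        qed
        have P1: "(\<Prod>q\<in>P. Legendre (- (x k * x j)) q) = 1" using prod_pm[OF finP pmL] ne by simp
        have "\<forall>q\<in>P. base k q = Legendre (- (x k * x j)) q"
        proof
          fix q assume q: "q \<in> P"
          have Nq: "N q = N q0" using allN q q0 by simp
          have dq: "dl q = Legendre (- (x k * x j)) q" unfolding dl_def Nq j(1) using j by simp
          have "\<not> int q dvd x k" "\<not> int q dvd x j" using noslot[OF q] noslotj[OF q] by simp_all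
          then have "\<not> int q dvd (- (x k * x j))" using ndvd_prod2 primes q by blast
          then have "dl q = 1 \<or> dl q = -1" using Leg_pm dq by metis
          then show "base k q = Legendre (- (x k * x j)) q"
            using dq Nq fl c2[OF q] unfolding base_def by auto
        qed
        then show ?thesis using P1 e by simp
      qed
    qed
  qed
  show ?thesis by (intro exI[of _ eps] conjI A B C[unfolded N_def])
qed



locale nsetup =
  fixes n p :: nat and P :: "nat set"
  assumes pprime: "prime p" and p7: "7 \<le> p" and finP: "finite P"
    and Pprime: "\<forall>q\<in>P. prime q \<and> 7 \<le> q" and pnotin: "p \<notin> P"
    and ndef: "n = p^2 * \<Prod>P"
    and pf: "prime_factors n = insert p P"
    and multp: "multiplicity p n = 2" and multq: "\<forall>q\<in>P. multiplicity q n = 1"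
begin

definition md :: "nat \<Rightarrow> nat" where "md j = (if j = p then p^2 else j)"

lemma md_prod: "(\<Prod>j\<in>insert p P. md j) = n"
proof -
  have "(\<Prod>j\<in>insert p P. md j) = md p * (\<Prod>j\<in>P. md j)" using finP pnotin by simp
  also have "(\<Prod>j\<in>P. md j) = (\<Prod>j\<in>P. j)" unfolding md_def using pnotin by (intro prod.cong) auto
  finally show ?thesis unfolding ndef md_def by simp
qed

lemma md_coprime: "\<forall>i\<in>insert p P. \<forall>j\<in>insert p P. i \<noteq> j \<longrightarrow> coprime (md i) (md j)"
proof (intro ballI impI)
  fix i j assume ij: "i \<in> insert p P" "j \<in> insert p P" "i \<noteq> j"
  have pr: "prime i" "prime j" using ij pprime Pprime by auto
  have c: "coprime i j" using primes_coprime[OF pr ij(3)] .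
  then show "coprime (md i) (md j)" unfolding md_def by auto
qed

lemma md_dvd: "j \<in> insert p P \<Longrightarrow> md j dvd n"
proof -
  assume j: "j \<in> insert p P"
  have "md j dvd (\<Prod>j\<in>insert p P. md j)" by (rule dvd_prodI) (use finP j in auto)
  then show ?thesis using md_prod by simp
qed

lemma p_ndvd_n1: "\<not> int p dvd 1"
  using pprime by (metis not_prime_1 of_nat_1 nat_dvd_1_iff_1 int_dvd_int_iff)

lemma assemble:
  fixes I :: "'a set" and x :: "'a \<Rightarrow> int"
  assumes finI: "finite I"
    and b: "\<forall>i\<in>I. \<not> int p dvd b i" "int p^2 dvd (\<Sum>i\<in>I. b i * x i)"
    and eps: "\<forall>i\<in>I. (\<Prod>q\<in>P. eps i q) = 1"
    and c: "\<forall>q\<in>P. \<forall>i\<in>I. Legendre (c q i) q = eps i q"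
    and e: "\<forall>i\<in>I. \<forall>q\<in>P. eps i q = 1 \<or> eps i q = -1"
    and cs: "\<forall>q\<in>P. int q dvd (\<Sum>i\<in>I. c q i * x i)"
  shows "\<exists>a. (\<forall>i\<in>I. a i \<in> S_set n) \<and> int n dvd (\<Sum>i\<in>I. int (a i) * x i)"
proof -
  define A0 where "A0 = insert p P"
  define u where "u = (\<lambda>i j. if j = p then nat (b i mod int (p^2)) else nat (c j i mod int j))"
  have npos: "0 < n" unfolding ndef using pprime Pprime finP
    by (simp add: prime_gt_0_nat)
  have ex: "\<forall>i. \<exists>y. y < n \<and> (\<forall>j\<in>A0. [y = u i j] (mod md j))"
  proof
    fix i
    obtain y where y: "\<forall>j\<in>A0. [y = u i j] (mod md j)"
      using chinese_remainder_nat[of A0 md "u i"] finP md_coprime unfolding A0_def by auto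
    have "\<forall>j\<in>A0. [y mod n = u i j] (mod md j)"
    proof
      fix j assume j: "j \<in> A0"
      have "[y mod n = y] (mod md j)" using md_dvd[of j] j unfolding A0_def
        by (metis cong_def mod_mod_cancel)
      then show "[y mod n = u i j] (mod md j)" using y j cong_trans by blast
    qed
    then show "\<exists>y. y < n \<and> (\<forall>j\<in>A0. [y = u i j] (mod md j))" using npos by (intro exI[of _ "y mod n"]) auto
  qed
  define a where "a = (\<lambda>i. SOME y. y < n \<and> (\<forall>j\<in>A0. [y = u i j] (mod md j)))"
  have a: "\<And>i. a i < n \<and> (\<forall>j\<in>A0. [a i = u i j] (mod md j))"
  proof -
    fix i
    show "a i < n \<and> (\<forall>j\<in>A0. [a i = u i j] (mod md j))"
      unfolding a_def by (rule someI_ex) (use ex in blast)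
  qed
  have p2pos: "0 < int (p^2)" using pprime prime_gt_0_nat by simp
  have congp: "\<And>i. [int (a i) = b i] (mod int (p^2))"
  proof -
    fix i
    have "[a i = u i p] (mod md p)" using a unfolding A0_def by blast
    then have "[a i = u i p] (mod p^2)" unfolding md_def by simp
    then have "[int (a i) = int (u i p)] (mod int (p^2))" using cong_int_iff by blast
    moreover have "int (u i p) = b i mod int (p^2)" unfolding u_def using p2pos by simp
    ultimately show "[int (a i) = b i] (mod int (p^2))" by (simp add: cong_def)
  qed
  have congq: "\<And>i q. q \<in> P \<Longrightarrow> [int (a i) = c q i] (mod int q)"
  proof -
    fix i q assume q: "q \<in> P"
    have qp: "q \<noteq> p" using q pnotin by auto
    have "[a i = u i q] (mod md q)" using a q unfolding A0_def by blast
    then have "[int (a i) = int (u i q)] (mod int q)" unfolding md_def using qp by (simp add: cong_int_iff)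
    moreover have "int (u i q) = c q i mod int q" unfolding u_def using qp q Pprime prime_gt_0_nat by simp
    ultimately show "[int (a i) = c q i] (mod int q)" by (simp add: cong_def)
  qed
  have pp2: "int p dvd int (p^2)" by simp
  have congp1: "\<And>i. [int (a i) = b i] (mod int p)"
    using cong_dvd_modulus[OF congp pp2] .
  have ndp: "\<And>i. i \<in> I \<Longrightarrow> \<not> p dvd a i"
  proof -
    fix i assume i: "i \<in> I"
    have "\<not> int p dvd int (a i)" using cong_dvd_iff[OF congp1[of i]] b(1) i by blast
    then show "\<not> p dvd a i" by simp
  qed
  have ndq: "\<And>i q. i \<in> I \<Longrightarrow> q \<in> P \<Longrightarrow> \<not> q dvd a i \<and> Legendre (int (a i)) q = eps i q"
  proof -
    fix i q assume iq: "i \<in> I" "q \<in> P"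
    have L: "Legendre (int (a i)) q = eps i q" using Leg_cong[OF congq[OF iq(2), of i]] c iq by simp
    have "eps i q = 1 \<or> eps i q = -1" using e iq by blast
    then have "Legendre (int (a i)) q \<noteq> 0" using L by auto
    then have "\<not> int q dvd int (a i)" using Leg_zero by blast
    then show "\<not> q dvd a i \<and> Legendre (int (a i)) q = eps i q" using L by simp
  qed
  have inS: "\<And>i. i \<in> I \<Longrightarrow> a i \<in> S_set n"
  proof -
    fix i assume i: "i \<in> I"
    have cp: "coprime (a i) (p^2)" using ndp[OF i] pprime prime_imp_power_coprime by blast
    have cq: "coprime (a i) (\<Prod>P)"
    proof (rule prod_coprime_right)
      fix q assume q: "q \<in> P"
      have "coprime q (a i)" using prime_imp_coprime[of q "a i"] ndq[OF i q] Pprime q by blast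
      then show "coprime (a i) q" by (simp add: coprime_commute)
    qed
    have cop: "coprime (a i) n" unfolding ndef using cp cq by simp
    have "jacobi_sym (a i) n = (\<Prod>r\<in>insert p P. Legendre (int (a i)) (int r) ^ multiplicity r n)"
      unfolding jacobi_sym_def pf ..
    also have "\<dots> = Legendre (int (a i)) (int p) ^ multiplicity p n * (\<Prod>r\<in>P. Legendre (int (a i)) (int r) ^ multiplicity r n)"
      by (rule prod.insert) (use finP pnotin in auto)
    also have "(\<Prod>r\<in>P. Legendre (int (a i)) (int r) ^ multiplicity r n) = (\<Prod>q\<in>P. Legendre (int (a i)) (int q) ^ 1)"
      by (rule prod.cong) (use multq in auto)
    also have "multiplicity p n = 2" by (rule multp)
    also have "Legendre (int (a i)) (int p) ^ 2 = 1"
    proof -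
      have h: "\<not> int p dvd int (a i)" using ndp[OF i] by simp
      show ?thesis using Leg_pm[OF h] by auto
    qed
    also have "(\<Prod>q\<in>P. Legendre (int (a i)) (int q) ^ 1) = (\<Prod>q\<in>P. eps i q)"
      using ndq[OF i] by (intro prod.cong) auto
    finally have "jacobi_sym (a i) n = 1" using eps i by simp
    then show "a i \<in> S_set n" unfolding S_set_def using cop a[of i] by simp
  qed
  have sum: "int n dvd (\<Sum>i\<in>I. int (a i) * x i)"
  proof -
    have "\<forall>j\<in>A0. [(\<Sum>i\<in>I. int (a i) * x i) = 0] (mod int (md j))"
    proof
      fix j assume j: "j \<in> A0"
      show "[(\<Sum>i\<in>I. int (a i) * x i) = 0] (mod int (md j))"
      proof (cases "j = p")
        case True
        have h1: "[(\<Sum>i\<in>I. int (a i) * x i) = (\<Sum>i\<in>I. b i * x i)] (mod int (p^2))"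
          using congp by (intro cong_sum cong_mult cong_refl)
        have h2: "[(\<Sum>i\<in>I. b i * x i) = 0] (mod int (p^2))" using b(2) by (simp add: cong_0_iff)
        have "[(\<Sum>i\<in>I. int (a i) * x i) = 0] (mod int (p^2))" using cong_trans[OF h1 h2] .
        moreover have "md j = p^2" using True md_def by simp
        ultimately show ?thesis by simp
      next
        case False
        then have q: "j \<in> P" using j unfolding A0_def by auto
        have h1: "[(\<Sum>i\<in>I. int (a i) * x i) = (\<Sum>i\<in>I. c j i * x i)] (mod int j)"
          using congq[OF q] by (intro cong_sum cong_mult cong_refl)
        have h2: "[(\<Sum>i\<in>I. c j i * x i) = 0] (mod int j)" using cs q by (simp add: cong_0_iff)
        have "[(\<Sum>i\<in>I. int (a i) * x i) = 0] (mod int j)" using cong_trans[OF h1 h2] .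
        moreover have "md j = j" using False md_def by simp
        ultimately show ?thesis by simp
      qed
    qed
    moreover have "\<forall>i\<in>A0. \<forall>j\<in>A0. i \<noteq> j \<longrightarrow> coprime (int (md i)) (int (md j))"
      using md_coprime unfolding A0_def by simp
    ultimately have "[(\<Sum>i\<in>I. int (a i) * x i) = 0] (mod (\<Prod>j\<in>A0. int (md j)))"
      by (rule cong_cong_prod_coprime)
    moreover have "(\<Prod>j\<in>A0. int (md j)) = int n" using md_prod unfolding A0_def by (metis of_nat_prod)
    ultimately show ?thesis by (simp add: cong_0_iff)
  qed
  show ?thesis using inS sum by blast
qed

end


lemma card_symdiff:
  assumes "finite A" "finite B"
  shows "card ((A - B) \<union> (B - A)) + 2 * card (A \<inter> B) = card A + card B"
proof -
  have d: "(A - B) \<inter> (B - A) = {}" by blast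
  have "card ((A - B) \<union> (B - A)) = card (A - B) + card (B - A)"
    using assms d by (intro card_Un_disjoint) auto
  moreover have "card (A - B) = card A - card (A \<inter> B)"
    using assms by (metis card_Diff_subset_Int Diff_Int2 Int_lower2 finite_Int inf.commute)
  moreover have "card (B - A) = card B - card (A \<inter> B)"
    using assms by (metis card_Diff_subset_Int inf_commute Diff_Int2 finite_Int inf_le2)
  moreover have "card (A \<inter> B) \<le> card A" "card (A \<inter> B) \<le> card B"
    using assms by (auto intro: card_mono)
  ultimately show ?thesis by linarith
qed

lemma even_symdiff:
  assumes "finite A" "finite B"
  shows "even (card (((A - B) \<union> (B - A)) \<inter> C)) \<longleftrightarrow> (even (card (A \<inter> C)) \<longleftrightarrow> even (card (B \<inter> C)))"
proof -
  have e: "((A - B) \<union> (B - A)) \<inter> C = ((A \<inter> C) - (B \<inter> C)) \<union> ((B \<inter> C) - (A \<inter> C))" by blast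
  have "card (((A \<inter> C) - (B \<inter> C)) \<union> ((B \<inter> C) - (A \<inter> C))) + 2 * card ((A \<inter> C) \<inter> (B \<inter> C))
      = card (A \<inter> C) + card (B \<inter> C)"
    using assms by (intro card_symdiff) auto
  then show ?thesis unfolding e by presburger
qed

lemma even_sub:
  assumes finE: "finite E" and finC: "finite Cs" and lt: "card Cs < card E"
  shows "\<exists>I\<subseteq>E. I \<noteq> {} \<and> (\<forall>C\<in>Cs. even (card (I \<inter> C)))"
proof -
  define f where "f = (\<lambda>I. {C\<in>Cs. odd (card (I \<inter> C))})"
  have "\<not> inj_on f (Pow E)"
  proof
    assume inj: "inj_on f (Pow E)"
    have "f ` Pow E \<subseteq> Pow Cs" unfolding f_def by auto
    then have "card (Pow E) \<le> card (Pow Cs)" using card_inj_on_le[OF inj] finC by blast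
    then have "(2::nat) ^ card E \<le> 2 ^ card Cs" using finE finC by (simp add: card_Pow)
    then show False using lt by simp
  qed
  then obtain I1 I2 where I: "I1 \<in> Pow E" "I2 \<in> Pow E" "I1 \<noteq> I2" "f I1 = f I2"
    unfolding inj_on_def by blast
  define I where "I = (I1 - I2) \<union> (I2 - I1)"
  have fin: "finite I1" "finite I2" using I finE by (auto intro: finite_subset)
  have "I \<subseteq> E" using I unfolding I_def by auto
  moreover have "I \<noteq> {}" using I(3) unfolding I_def by blast
  moreover have "\<forall>C\<in>Cs. even (card (I \<inter> C))"
  proof
    fix C assume C: "C \<in> Cs"
    have "odd (card (I1 \<inter> C)) \<longleftrightarrow> odd (card (I2 \<inter> C))"
    proof -
      have "C \<in> f I1 \<longleftrightarrow> C \<in> f I2" using I(4) by simp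
      then show ?thesis unfolding f_def using C by simp
    qed
    then show "even (card (I \<inter> C))" unfolding I_def using even_symdiff[OF fin] by blast
  qed
  ultimately show ?thesis by blast
qed

context nsetup begin

lemma solve:
  fixes I :: "nat set" and x :: "nat \<Rightarrow> int"
  assumes finI: "finite I"
    and H1: "even (card {i\<in>I. \<not> int p dvd x i})" "even (card {i\<in>I. \<not> int p^2 dvd x i})"
    and H2: "\<forall>q\<in>P. card {k\<in>I. \<not> int q dvd x k} \<noteq> 1"
    and H3: "\<not> (\<exists>i j. i \<noteq> j \<and> P \<noteq> {} \<and> (\<forall>q\<in>P. {k\<in>I. \<not> int q dvd x k} = {i,j})
               \<and> (\<Prod>q\<in>P. Legendre (- (x i * x j)) q) = -1)"
  shows "\<exists>a. (\<forall>i\<in>I. a i \<in> S_set n) \<and> int n dvd (\<Sum>i\<in>I. int (a i) * x i)"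
proof -
  obtain b where b: "\<forall>i\<in>I. \<not> int p dvd b i" "int p^2 dvd (\<Sum>i\<in>I. b i * x i)"
    using comp_p2[OF pprime finI H1] by blast
  have primes: "\<forall>q\<in>P. prime q" using Pprime by blast
  obtain eps where eps: "\<forall>i\<in>I. \<forall>q\<in>P. eps i q = 1 \<or> eps i q = -1" "\<forall>i\<in>I. (\<Prod>q\<in>P. eps i q) = 1"
     "\<forall>q\<in>P. \<forall>i j. i \<noteq> j \<longrightarrow> {k\<in>I. \<not> int q dvd x k} = {i,j} \<longrightarrow> eps i q * eps j q = Legendre (- (x i * x j)) q"
    using chars[OF finP finI primes H2 H3] by blast
  have ex: "\<forall>q\<in>P. \<exists>c. (\<forall>i\<in>I. Legendre (c i) q = eps i q) \<and> int q dvd (\<Sum>i\<in>I. c i * x i)"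
  proof
    fix q assume q: "q \<in> P"
    interpret qp q using Pprime q by unfold_locales auto
    show "\<exists>c. (\<forall>i\<in>I. Legendre (c i) q = eps i q) \<and> int q dvd (\<Sum>i\<in>I. c i * x i)"
      by (rule comp_q[OF finI]) (use eps q H2 in auto)
  qed
  define c where "c = (\<lambda>q. SOME c. (\<forall>i\<in>I. Legendre (c i) q = eps i q) \<and> int q dvd (\<Sum>i\<in>I. c i * x i))"
  have c: "\<forall>q\<in>P. (\<forall>i\<in>I. Legendre (c q i) q = eps i q) \<and> int q dvd (\<Sum>i\<in>I. c q i * x i)"
  proof
    fix q assume q: "q \<in> P"
    show "(\<forall>i\<in>I. Legendre (c q i) q = eps i q) \<and> int q dvd (\<Sum>i\<in>I. c q i * x i)"
      using someI_ex[OF ex[rule_format, OF q]] unfolding c_def by simp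
  qed
  show ?thesis
    by (rule assemble[OF finI b eps(2)]) (use c eps(1) in auto)
qed

end


context nsetup begin

lemma upper_int:
  fixes x :: "nat \<Rightarrow> int" and E :: "nat set"
  assumes cP: "card P \<noteq> 1" and finE: "finite E" and cE: "card E = card P + 3"
  shows "\<exists>I\<subseteq>E. I \<noteq> {} \<and> (\<exists>a. (\<forall>i\<in>I. a i \<in> S_set n) \<and> int n dvd (\<Sum>i\<in>I. int (a i) * x i))"
proof -
  define CU where "CU = {i. \<not> int p dvd x i}"
  define CV where "CV = {i. \<not> int p^2 dvd x i}"
  define CQ where "CQ = (\<lambda>q::nat. {i. \<not> int q dvd x i})"
  have eU: "\<And>I. {i\<in>I. \<not> int p dvd x i} = I \<inter> CU" unfolding CU_def by auto
  have eV: "\<And>I. {i\<in>I. \<not> int p^2 dvd x i} = I \<inter> CV" unfolding CV_def by auto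
  have eQ: "\<And>I q. {k\<in>I. \<not> int q dvd x k} = I \<inter> CQ q" unfolding CQ_def by auto
  define Cs where "Cs = insert CU (insert CV (CQ ` P))"
  have finCs: "finite Cs" unfolding Cs_def using finP by simp
  have "card Cs \<le> Suc (Suc (card (CQ ` P)))" unfolding Cs_def
    by (metis card_insert_le_m1 finite_imageI finite_insert finP le_SucI diff_Suc_1 card_insert_if le_refl Suc_le_mono)
  also have "card (CQ ` P) \<le> card P" using finP by (rule card_image_le)
  finally have cCs: "card Cs < card E" using cE by simp
  obtain I1 where I1: "I1 \<subseteq> E" "I1 \<noteq> {}" "\<forall>C\<in>Cs. even (card (I1 \<inter> C))"
    using even_sub[OF finE finCs cCs] by blast
  have finI1: "finite I1" using I1(1) finE by (rule finite_subset)
  have I1U: "even (card (I1 \<inter> CU))" and I1V: "even (card (I1 \<inter> CV))"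
    and I1Q: "\<forall>q\<in>P. even (card (I1 \<inter> CQ q))" using I1(3) unfolding Cs_def by auto
  have H1: "even (card {i\<in>I1. \<not> int p dvd x i})" "even (card {i\<in>I1. \<not> int p^2 dvd x i})"
    using I1U I1V eU eV by simp_all
  have H2: "\<forall>q\<in>P. card {k\<in>I1. \<not> int q dvd x k} \<noteq> 1"
    using I1Q eQ by (metis odd_one)
  show ?thesis
  proof (cases "\<exists>i j. i \<noteq> j \<and> P \<noteq> {} \<and> (\<forall>q\<in>P. {k\<in>I1. \<not> int q dvd x k} = {i,j})
               \<and> (\<Prod>q\<in>P. Legendre (- (x i * x j)) q) = -1")
    case False
    then show ?thesis using solve[OF finI1 H1 H2 False] I1 by blast
  next
    case True
    then obtain i j where ij: "i \<noteq> j" "P \<noteq> {}" "\<forall>q\<in>P. {k\<in>I1. \<not> int q dvd x k} = {i,j}" by blast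
    obtain q1 where q1: "q1 \<in> P" using ij(2) by blast
    have ijI1: "i \<in> I1" "j \<in> I1" using ij(3) q1 by blast+
    have full: "\<And>q. q \<in> P \<Longrightarrow> \<not> int q dvd x i \<and> \<not> int q dvd x j" using ij(3) by blast
    have cP2: "2 \<le> card P" using cP ij(2) finP by (metis One_nat_def card_0_eq le_less_linear less_2_cases)
    define W where "W = E - {i, j}"
    have sij: "{i, j} \<subseteq> E" using ijI1 I1(1) by auto
    have "card W = card E - card {i, j}" unfolding W_def using card_Diff_subset[OF _ sij] by simp
    then have "card W = card E - 2" using ij(1) by simp
    then have cW: "3 \<le> card W" using cE cP2 by simp
    obtain W3 where W3: "W3 \<subseteq> W" "card W3 = 3" "finite W3"
      using obtain_subset_with_card_n[OF cW] by metis
    have finC2: "finite {CU, CV}" by simp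
    have cC2: "card {CU, CV} < card W3" using W3(2) by (simp add: card_insert_le_m1) (metis card_2_iff' card.empty card_insert_le less_Suc_eq_le numeral_3_eq_3 nat_less_le insert_absorb2 card_insert_if finite.intros(1) finite_insert)
    obtain R0 where R0: "R0 \<subseteq> W3" "R0 \<noteq> {}" "\<forall>C\<in>{CU, CV}. even (card (R0 \<inter> C))"
      using even_sub[OF W3(3) finC2 cC2] by blast
    have finR0: "finite R0" using R0(1) W3(3) by (rule finite_subset)
    have R0E: "R0 \<subseteq> E" and R0ij: "i \<notin> R0" "j \<notin> R0" using R0(1) W3(1) unfolding W_def by auto
    show ?thesis
    proof (cases "\<forall>k\<in>R0. \<forall>q\<in>P. int q dvd x k")
      case True
      have e0: "\<forall>q\<in>P. {k\<in>R0. \<not> int q dvd x k} = {}" using True by auto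
      have H1': "even (card {i\<in>R0. \<not> int p dvd x i})" "even (card {i\<in>R0. \<not> int p^2 dvd x i})"
        using R0(3) eU eV by simp_all
      have H2': "\<forall>q\<in>P. card {k\<in>R0. \<not> int q dvd x k} \<noteq> 1"
      proof
        fix q assume "q \<in> P"
        then have "{k\<in>R0. \<not> int q dvd x k} = {}" using e0 by blast
        then show "card {k\<in>R0. \<not> int q dvd x k} \<noteq> 1" by (simp only: card.empty)
      qed
      have H3': "\<not> (\<exists>i j. i \<noteq> j \<and> P \<noteq> {} \<and> (\<forall>q\<in>P. {k\<in>R0. \<not> int q dvd x k} = {i,j})
               \<and> (\<Prod>q\<in>P. Legendre (- (x i * x j)) q) = -1)"
        using e0 q1 by auto
      show ?thesis using solve[OF finR0 H1' H2' H3'] R0 R0E by blast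
    next
      case False
      then obtain k q0 where k: "k \<in> R0" "q0 \<in> P" "\<not> int q0 dvd x k" by blast
      define I' where "I' = (I1 - R0) \<union> (R0 - I1)"
      have finI': "finite I'" unfolding I'_def using finI1 finR0 by simp
      have kW: "k \<in> W" using k(1) R0(1) W3(1) by blast
      have kI1: "k \<notin> I1"
      proof
        assume "k \<in> I1"
        then have "k \<in> {k\<in>I1. \<not> int q0 dvd x k}" using k by simp
        then have "k \<in> {i, j}" using ij(3) k(2) by simp
        then show False using kW unfolding W_def by blast
      qed
      have inI': "i \<in> I'" "j \<in> I'" "k \<in> I'" unfolding I'_def using ijI1 R0ij kI1 k(1) by auto
      have kij: "k \<noteq> i" "k \<noteq> j" using kW unfolding W_def by auto
      have H1': "even (card {i\<in>I'. \<not> int p dvd x i})" "even (card {i\<in>I'. \<not> int p^2 dvd x i})"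
        unfolding eU eV I'_def using even_symdiff[OF finI1 finR0] I1U I1V R0(3) by simp_all
      have H2': "\<forall>q\<in>P. card {k\<in>I'. \<not> int q dvd x k} \<noteq> 1"
      proof
        fix q assume q: "q \<in> P"
        have sub: "{i, j} \<subseteq> {k\<in>I'. \<not> int q dvd x k}" using inI' full[OF q] by auto
        have "card {i, j} \<le> card {k\<in>I'. \<not> int q dvd x k}" using finI' by (intro card_mono[OF _ sub]) auto
        then show "card {k\<in>I'. \<not> int q dvd x k} \<noteq> 1" using ij(1) by simp
      qed
      have H3': "\<not> (\<exists>i j. i \<noteq> j \<and> P \<noteq> {} \<and> (\<forall>q\<in>P. {k\<in>I'. \<not> int q dvd x k} = {i,j})
               \<and> (\<Prod>q\<in>P. Legendre (- (x i * x j)) q) = -1)"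
      proof
        assume "\<exists>i j. i \<noteq> j \<and> P \<noteq> {} \<and> (\<forall>q\<in>P. {k\<in>I'. \<not> int q dvd x k} = {i,j})
               \<and> (\<Prod>q\<in>P. Legendre (- (x i * x j)) q) = -1"
        then obtain i' j' where h: "\<forall>q\<in>P. {k\<in>I'. \<not> int q dvd x k} = {i',j'}" by blast
        have "{k\<in>I'. \<not> int q0 dvd x k} = {i',j'}" using h k(2) by blast
        moreover have "i \<in> {k\<in>I'. \<not> int q0 dvd x k}" "j \<in> {k\<in>I'. \<not> int q0 dvd x k}"
          "k \<in> {k\<in>I'. \<not> int q0 dvd x k}" using inI' full[OF k(2)] k(3) by auto
        ultimately have "i \<in> {i',j'}" "j \<in> {i',j'}" "k \<in> {i',j'}" by auto
        then show False using ij(1) kij by auto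
      qed
      have "I' \<subseteq> E" unfolding I'_def using I1(1) R0E by auto
      then show ?thesis using solve[OF finI' H1' H2' H3'] inI' by blast
    qed
  qed
qed

end


lemma take_prod_dvd:
  fixes ps :: "nat list"
  assumes "m \<le> i"
  shows "prod_list (take m ps) dvd prod_list (take i ps)"
proof -
  have "take i ps = take m (take i ps) @ drop m (take i ps)" by (rule append_take_drop_id[symmetric])
  also have "take m (take i ps) = take m ps" using assms by (simp add: min_def)
  finally have "prod_list (take i ps) = prod_list (take m ps) * prod_list (drop m (take i ps))"
    by (metis prod_list.append)
  then show ?thesis by simp
qed

lemma lower_nozs:
  fixes ps :: "nat list"
  assumes pr: "\<forall>r\<in>set ps. prime r" and nd: "n = prod_list ps"
    and A: "\<forall>a\<in>A. coprime a n" and k: "k \<le> length ps"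
  shows "\<not> has_A_zero_sum_subseq n A (map (\<lambda>j. prod_list (take j ps)) [0..<k])"
proof
  define d where "d = (\<lambda>j. prod_list (take j ps))"
  assume "has_A_zero_sum_subseq n A (map (\<lambda>j. prod_list (take j ps)) [0..<k])"
  then obtain I a where I: "I \<subseteq> {..<k}" "I \<noteq> {}" "\<forall>i\<in>I. a i \<in> A"
    and s: "[(\<Sum>i\<in>I. a i * map d [0..<k] ! i) = 0] (mod n)"
    unfolding has_A_zero_sum_subseq_def d_def by auto
  have finI: "finite I" using I(1) finite_subset by blast
  have s': "(\<Sum>i\<in>I. a i * map d [0..<k] ! i) = (\<Sum>i\<in>I. a i * d i)"
    by (rule sum.cong) (use I(1) in auto)
  define j0 where "j0 = Min I"
  have j0: "j0 \<in> I" "\<forall>i\<in>I. j0 \<le> i" using finI I(2) unfolding j0_def by auto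
  have j0l: "j0 < length ps" using j0 I(1) k by auto
  define r where "r = ps ! j0"
  have rin: "r \<in> set ps" using j0l unfolding r_def by simp
  have rp: "prime r" using pr rin by blast
  have dS: "d (Suc j0) = d j0 * r" unfolding d_def r_def using j0l by (simp add: take_Suc_conv_app_nth)
  have dn: "d (Suc j0) dvd n"
  proof -
    have "prod_list (take (Suc j0) ps) dvd prod_list (take (length ps) ps)" by (rule take_prod_dvd) (use j0l in simp)
    then show ?thesis unfolding d_def nd by simp
  qed
  have "n dvd (\<Sum>i\<in>I. a i * d i)" using s s' by (simp add: cong_0_iff)
  then have h: "d (Suc j0) dvd (\<Sum>i\<in>I. a i * d i)" using dvd_trans[OF dn] by simp
  have "(\<Sum>i\<in>I. a i * d i) = a j0 * d j0 + (\<Sum>i\<in>I - {j0}. a i * d i)"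
    using finI j0(1) by (simp add: sum.remove)
  moreover have "d (Suc j0) dvd (\<Sum>i\<in>I - {j0}. a i * d i)"
  proof (rule dvd_sum)
    fix i assume i: "i \<in> I - {j0}"
    then have "j0 \<le> i" "i \<noteq> j0" using j0(2) by auto
    then have "Suc j0 \<le> i" by simp
    then have "d (Suc j0) dvd d i" unfolding d_def by (rule take_prod_dvd)
    then show "d (Suc j0) dvd a i * d i" by simp
  qed
  ultimately have "d (Suc j0) dvd a j0 * d j0" using h by (simp add: dvd_add_left_iff)
  then have "d j0 * r dvd d j0 * a j0" unfolding dS by (simp add: mult.commute)
  moreover have "d j0 \<noteq> 0"
  proof -
    have "\<forall>x\<in>set (take j0 ps). x \<noteq> 0"
    proof
      fix x assume "x \<in> set (take j0 ps)"
      then have "x \<in> set ps" by (rule in_set_takeD)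
      then have "prime x" using pr by blast
      then show "x \<noteq> 0" by auto
    qed
    then have "0 \<notin> set (take j0 ps)" by blast
    then show ?thesis unfolding d_def by (simp add: prod_list_zero_iff)
  qed
  ultimately have ra: "r dvd a j0" by simp
  have rn: "r dvd n" unfolding nd using rin by (rule prod_list_dvd)
  have cn: "coprime (a j0) n" using A I(3) j0(1) by blast
  have "coprime (a j0) r" using coprime_divisors[OF dvd_refl rn cn] .
  then have "is_unit r" using coprime_common_divisor[OF _ ra dvd_refl] by (simp add: coprime_commute)
  then show False using rp by simp
qed

lemma lower_range:
  fixes ps :: "nat list"
  assumes pr: "\<forall>r\<in>set ps. prime r" and nd: "n = prod_list ps" and k: "k \<le> length ps"
  shows "set (map (\<lambda>j. prod_list (take j ps)) [0..<k]) \<subseteq> {..<n}"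
proof
  fix y assume "y \<in> set (map (\<lambda>j. prod_list (take j ps)) [0..<k])"
  then obtain j where j: "j < k" "y = prod_list (take j ps)" by auto
  have "prod_list (take j ps @ drop j ps) = prod_list (take j ps) * prod_list (drop j ps)"
    by (rule prod_list.append)
  then have e: "n = y * prod_list (drop j ps)" unfolding nd j(2) by simp
  have nz: "\<forall>x\<in>set ps. x \<noteq> 0"
  proof
    fix x assume "x \<in> set ps"
    then have "prime x" using pr by blast
    then show "x \<noteq> 0" by auto
  qed
  have "0 \<notin> set (take j ps)"
  proof
    assume "0 \<in> set (take j ps)"
    then have "0 \<in> set ps" by (rule in_set_takeD)
    then show False using nz by blast
  qed
  then have "y \<noteq> 0" unfolding j(2) by (simp add: prod_list_zero_iff)
  moreover have "prod_list (drop j ps) \<ge> 2"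
  proof -
    have "drop j ps \<noteq> []" using j k by simp
    then obtain r rs where rr: "drop j ps = r # rs" by (meson neq_Nil_conv)
    have "r \<in> set (drop j ps)" using rr by simp
    then have "r \<in> set ps" by (rule in_set_dropD)
    then have "r \<ge> 2" using pr prime_ge_2_nat by blast
    moreover have "0 \<notin> set rs"
    proof
      assume "0 \<in> set rs"
      then have "0 \<in> set (drop j ps)" using rr by simp
      then have "0 \<in> set ps" by (rule in_set_dropD)
      then show False using nz by blast
    qed
    then have "prod_list rs \<noteq> 0" by (simp add: prod_list_zero_iff)
    then have "prod_list rs \<ge> 1" by simp
    ultimately have "r * prod_list rs \<ge> 2 * 1" by (intro mult_le_mono)
    then show ?thesis using rr by simp
  qed
  ultimately have "y * 1 < y * prod_list (drop j ps)" by (intro mult_less_mono2) auto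
  then have "y < n" using e by simp
  then show "y \<in> {..<n}" by simp
qed



context nsetup begin

lemma upper:
  assumes cP: "card P \<noteq> 1" and len: "length xs = card P + 3"
  shows "has_A_zero_sum_subseq n (S_set n) xs"
proof -
  have "finite {..<length xs}" "card {..<length xs} = card P + 3" using len by auto
  then obtain I a where I: "I \<subseteq> {..<length xs}" "I \<noteq> {}" "\<forall>i\<in>I. a i \<in> S_set n"
      "int n dvd (\<Sum>i\<in>I. int (a i) * int (xs ! i))"
    using upper_int[OF cP, of "{..<length xs}" "\<lambda>i. int (xs ! i)"] by blast
  have "int (\<Sum>i\<in>I. a i * xs ! i) = (\<Sum>i\<in>I. int (a i) * int (xs ! i))" by simp
  then have "n dvd (\<Sum>i\<in>I. a i * xs ! i)" using I(4) by (metis int_dvd_int_iff)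
  then have "[(\<Sum>i\<in>I. a i * xs ! i) = 0] (mod n)" by (simp add: cong_0_iff)
  then show ?thesis unfolding has_A_zero_sum_subseq_def using I by blast
qed

end

theorem theorem4p4:
  fixes n :: nat
  assumes "n > 0" and "odd n"
    and "\<exists>p'. prime p' \<and> multiplicity p' n = 2 \<and>
           (\<forall>q\<in>prime_factors n. q \<noteq> p' \<longrightarrow> multiplicity q n = 1)"
    and "\<forall>q\<in>prime_factors n. q \<ge> 7"
    and "small_omega n \<noteq> 2"
  shows "D_A (S_set n) n = big_omega n + 1"
proof -
  obtain p where p: "prime p" "multiplicity p n = 2" "\<forall>q\<in>prime_factors n. q \<noteq> p \<longrightarrow> multiplicity q n = 1"
    using assms(3) by blast
  have pin: "p \<in> prime_factors n" using p(1,2) by (simp add: prime_factors_multiplicity)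
  define P where "P = prime_factors n - {p}"
  have pf: "prime_factors n = insert p P" using pin unfolding P_def by auto
  have finP: "finite P" unfolding P_def by simp
  have Pprime: "\<forall>q\<in>P. prime q \<and> 7 \<le> q" using assms(4) unfolding P_def by auto
  have p7: "7 \<le> p" using assms(4) pin by blast
  have pnotin: "p \<notin> P" unfolding P_def by simp
  have multq: "\<forall>q\<in>P. multiplicity q n = 1" using p(3) unfolding P_def by auto
  have "n = (\<Prod>r\<in>prime_factors n. r ^ multiplicity r n)" using assms(1) by (rule prime_factorization_nat)
  also have "\<dots> = p ^ multiplicity p n * (\<Prod>r\<in>P. r ^ multiplicity r n)"
    unfolding pf by (rule prod.insert) (use finP pnotin in auto)
  also have "(\<Prod>r\<in>P. r ^ multiplicity r n) = (\<Prod>r\<in>P. r)"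
    by (rule prod.cong) (use multq in auto)
  finally have ndef: "n = p^2 * \<Prod>P" using p(2) by simp
  interpret nsetup n p P
    by unfold_locales (use p(1) p7 finP Pprime pnotin ndef pf p(2) multq in auto)
  have bo: "big_omega n = card P + 2"
  proof -
    have "big_omega n = multiplicity p n + (\<Sum>r\<in>P. multiplicity r n)"
      unfolding big_omega_def pf by (rule sum.insert) (use finP pnotin in auto)
    also have "(\<Sum>r\<in>P. multiplicity r n) = (\<Sum>r\<in>P. 1)" by (rule sum.cong) (use multq in auto)
    finally show ?thesis using p(2) by simp
  qed
  have cP: "card P \<noteq> 1"
  proof -
    have "small_omega n = card P + 1" unfolding small_omega_def pf using finP pnotin by simp
    then show ?thesis using assms(5) by simp
  qed
  define ps where "ps = p # p # sorted_list_of_set P"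
  have prps: "\<forall>r\<in>set ps. prime r" unfolding ps_def using p(1) Pprime finP by auto
  have "\<Prod>P = prod_list (sorted_list_of_set P)"
    using prod.distinct_set_conv_list[of "sorted_list_of_set P" "\<lambda>x. x"] finP by simp
  then have nps: "n = prod_list ps" unfolding ps_def ndef by (simp add: power2_eq_square)
  have lps: "length ps = card P + 2" unfolding ps_def by simp
  have A: "\<forall>a\<in>S_set n. coprime a n" unfolding S_set_def by auto
  define Q where "Q = (\<lambda>k. \<forall>xs. length xs = k \<and> set xs \<subseteq> {..<n} \<longrightarrow> has_A_zero_sum_subseq n (S_set n) xs)"
  have "D_A (S_set n) n = (LEAST k. Q k)" unfolding D_A_def Q_def by simp
  also have "(LEAST k. Q k) = card P + 3"
  proof (rule Least_equality)
    show "Q (card P + 3)" unfolding Q_def using upper cP by blast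
  next
    fix k assume Qk: "Q k"
    show "card P + 3 \<le> k"
    proof (rule ccontr)
      assume "\<not> card P + 3 \<le> k"
      then have kl: "k \<le> length ps" using lps by simp
      define L where "L = map (\<lambda>j. prod_list (take j ps)) [0..<k]"
      have "length L = k" unfolding L_def by simp
      moreover have "set L \<subseteq> {..<n}" unfolding L_def by (rule lower_range[OF prps nps kl])
      moreover have "\<not> has_A_zero_sum_subseq n (S_set n) L" unfolding L_def by (rule lower_nozs[OF prps nps A kl])
      ultimately show False using Qk unfolding Q_def by blast
    qed
  qed
  finally show ?thesis using bo by simp
qed


end
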